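(* Consider the setting described in the context. Suppose that: (i) $\frac{1}{n} \sum_{i=1}^{n} \lVert Q^*(x^i)\rVert^4 \xrightarrow{p} \mathbb{E}[\lVert Q^*(X)\rVert^4]$ and $\frac{1}{n} \sum_{i=1}^{n} \lVert [Q^*(x^i)]^{-1}\rVert^2 \xrightarrow{p} \mathbb{E}[\lVert [Q^*(X)]^{-1}\rVert^2]$, where these expectations are finite; (ii) $\frac{1}{n} \sum_{i=1}^{n} \lVert\varepsilon^i\rVert^4 \xrightarrow{p} \mathbb{E}[\lVert\varepsilon\rVert^4] < +\infty$; (iii) $\hat{f}_n(x) \xrightarrow{p} f^*(x)$ and $\hat{Q}_n(x) \xrightarrow{p} Q^*(x)$ for $P_X$-a.e. $x \in \mathcal{X}$, and $\frac{1}{n} \sum_{i=1}^{n} \lVert \hat{f}_n(x^i) - f^*(x^i)\rVert^2 \xrightarrow{p} 0$ and $\frac{1}{n} \sum_{i=1}^{n} \lVert [\hat{Q}_n(x^i)]^{-1} - [Q^*(x^i)]^{-1}\rVert^2 \xrightarrow{p} 0$. Then $\frac{1}{n} \sum_{i=1}^{n} \lVert \tilde{\varepsilon}^i_n(x)\rVert \xrightarrow{p} 0$ for $P_X$-a.e. $x \in \mathcal{X}$.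
   Context: Random vectors $Y \in \mathbb{R}^{d_y}$ and covariates $X \in \mathbb{R}^{d_x}$ satisfy $Y = f^*(X) + Q^*(X)\varepsilon$, where $f^*:\mathbb{R}^{d_x}\to\mathbb{R}^{d_y}$, $Q^*:\mathbb{R}^{d_x}\to\mathbb{R}^{d_y\times d_y}$, the zero-mean random error $\varepsilon \in \mathbb{R}^{d_y}$ is independent of $X$, and $Q^*(x) \succ 0$ (positive definite) for $P_X$-a.e. $x$ in the support $\mathcal{X}$ of $X$ ($P_X$ is the distribution of $X$). Data $\mathcal{D}_n = \{(y^i,x^i)\}_{i=1}^n$ are joint observations of $(Y,X)$, with corresponding error realizations $\varepsilon^i = [Q^*(x^i)]^{-1}(y^i - f^*(x^i))$. Regression estimates $\hat{f}_n$ of $f^*$ and $\hat{Q}_n$ of $Q^*$ are computed from $\mathcal{D}_n$, with $\hat{Q}_n(x) \succ 0$ almost surely for $P_X$-a.e. $x \in \mathcal{X}$. Define empirical residuals $\hat{\varepsilon}^i_n := [\hat{Q}_n(x^i)]^{-1}(y^i - \hat{f}_n(x^i))$ and, for $x \in \mathcal{X}$, the deviation terms $\tilde{\varepsilon}^i_n(x) := (\hat{f}_n(x) + \hat{Q}_n(x)\hat{\varepsilon}^i_n) - (f^*(x) + Q^*(x)\varepsilon^i)$, $i=1,\dots,n$. $\lVert\cdot\rVert$ is the Euclidean norm on vectors and the induced operator norm on matrices. $\xrightarrow{p}$ denotes convergence in probability as $n\to\infty$ with respect to the probability measure generating the data. *)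

theory Defs
  imports "HOL-Probability.Probability"
begin

definition opnorm :: "real^'n^'m \<Rightarrow> real" where
  "opnorm A = onorm (\<lambda>v. A *v v)"

definition pos_def :: "real^'n^'n \<Rightarrow> bool" where
  "pos_def A \<longleftrightarrow> transpose A = A \<and> (\<forall>v. v \<noteq> 0 \<longrightarrow> v \<bullet> (A *v v) > 0)"

text \<open>Stated via outer probability, so that
  no measurability side conditions are needed; for measurable Z n it is the usual
  notion: for all e > 0, P(dist (Z n) c > e) tends to 0.\<close>
definition conv_in_prob :: "'a measure \<Rightarrow> (nat \<Rightarrow> 'a \<Rightarrow> 'b::metric_space) \<Rightarrow> 'b \<Rightarrow> bool" where
  "conv_in_prob M Z c \<longleftrightarrow>
     (\<forall>e>0. \<forall>\<delta>>0. \<exists>N. \<forall>n\<ge>N. \<exists>A\<in>sets M.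
        {\<omega>\<in>space M. dist (Z n \<omega>) c > e} \<subseteq> A \<and> measure M A < \<delta>)"

text \<open>Standardized residual [Q(x)]^{-1} (y - f(x)). With (f,Q) = (f*,Q*) this is the
  error realization eps^i; with the estimates it is the empirical residual.\<close>
definition std_resid ::
  "(real^'dx \<Rightarrow> real^'dy) \<Rightarrow> (real^'dx \<Rightarrow> real^'dy^'dy) \<Rightarrow> real^'dx \<Rightarrow> real^'dy \<Rightarrow> real^'dy" where
  "std_resid f Q xi yi = matrix_inv (Q xi) *v (yi - f xi)"

definition eps_tilde ::
  "(real^'dx \<Rightarrow> real^'dy) \<Rightarrow> (real^'dx \<Rightarrow> real^'dy^'dy) \<Rightarrow>
   (real^'dx \<Rightarrow> real^'dy) \<Rightarrow> (real^'dx \<Rightarrow> real^'dy^'dy) \<Rightarrow>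
   real^'dx \<Rightarrow> real^'dy \<Rightarrow> real^'dx \<Rightarrow> real^'dy" where
  "eps_tilde fs Qs fh Qh xi yi x =
     (fh x + Qh x *v std_resid fh Qh xi yi) - (fs x + Qs x *v std_resid fs Qs xi yi)"

end

theory Submission
  imports Defs
begin


lemma opnorm_mult: "norm (A *v v) \<le> opnorm A * norm (v::real^'n)"
  unfolding opnorm_def by (rule onorm) simp

lemma opnorm_nonneg: "0 \<le> opnorm (A::real^'n^'m)"
  unfolding opnorm_def by (rule onorm_pos_le) simp

lemma pos_def_invertible:
  fixes A :: "real^'n^'n"
  assumes "pos_def A" shows "invertible A"
proof -
  have "\<forall>x. A *v x = 0 \<longrightarrow> x = 0"
    using assms unfolding pos_def_def by (metis inner_zero_right less_irrefl)
  then show ?thesis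
    by (simp add: invertible_left_inverse matrix_left_invertible_ker)
qed

lemma inv_cancel:
  fixes A :: "real^'n^'n"
  assumes "invertible A" shows "A *v (matrix_inv A *v r) = r"
proof -
  have "A ** matrix_inv A = mat 1"
    using assms unfolding invertible_def matrix_inv_def by (metis (mono_tags, lifting) someI_ex)
  then show ?thesis by (metis matrix_vector_mul_assoc matrix_vector_mul_lid)
qed

lemma per_i:
  fixes fs fh :: "real^'dx \<Rightarrow> real^'dy" and Qs Qh :: "real^'dx \<Rightarrow> real^'dy^'dy"
  assumes inv: "invertible (Qs xi)"
  shows "norm (eps_tilde fs Qs fh Qh xi yi x) \<le>
     norm (fh x - fs x) + opnorm (Qh x - Qs x) * (1 + norm (std_resid fs Qs xi yi) ^ 4)
     + (opnorm (Qh x - Qs x) + opnorm (Qs x)) *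
       (opnorm (matrix_inv (Qh xi) - matrix_inv (Qs xi)) * opnorm (Qs xi) * norm (std_resid fs Qs xi yi)
        + opnorm (matrix_inv (Qh xi) - matrix_inv (Qs xi)) * norm (fh xi - fs xi)
        + opnorm (matrix_inv (Qs xi)) * norm (fh xi - fs xi))"
proof -
  define e where "e = std_resid fs Qs xi yi"
  define eh where "eh = std_resid fh Qh xi yi"
  define r where "r = yi - fs xi"
  define d where "d = fh xi - fs xi"
  define H where "H = matrix_inv (Qh xi)"
  define U where "U = matrix_inv (Qs xi)"
  define a where "a = norm (fh x - fs x)"
  define b where "b = opnorm (Qh x - Qs x)"
  define c where "c = opnorm (Qs x)"
  define u where "u = opnorm (H - U)"
  have e: "e = U *v r" unfolding e_def std_resid_def U_def r_def ..
  have r: "r = Qs xi *v e" using inv_cancel[OF inv] unfolding e U_def by simp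
  have ehe: "eh - e = (H - U) *v r - (H - U) *v d - U *v d"
    unfolding eh_def std_resid_def H_def[symmetric] e d_def r_def
    by (simp add: algebra_simps)
  have nr: "norm r \<le> opnorm (Qs xi) * norm e" using opnorm_mult r by metis
  have "norm (eh - e) \<le> norm ((H - U) *v r) + norm ((H - U) *v d) + norm (U *v d)"
    unfolding ehe by (smt (verit) norm_triangle_ineq4)
  also have "\<dots> \<le> u * (opnorm (Qs xi) * norm e) + u * norm d + opnorm U * norm d"
    using opnorm_mult[of "H - U" r] opnorm_mult[of "H - U" d] opnorm_mult[of U d]
      mult_left_mono[OF nr opnorm_nonneg[of "H - U"]] unfolding u_def by linarith
  finally have B: "norm (eh - e) \<le> u * opnorm (Qs xi) * norm e + u * norm d + opnorm U * norm d"
    by (simp add: mult.assoc)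
  have T: "eps_tilde fs Qs fh Qh xi yi x = (fh x - fs x) + (Qh x - Qs x) *v e + (Qh x - Qs x) *v (eh - e) + Qs x *v (eh - e)"
    unfolding eps_tilde_def eh_def[symmetric] e_def[symmetric] by (simp add: algebra_simps)
  have "norm (eps_tilde fs Qs fh Qh xi yi x) \<le> a + b * norm e + b * norm (eh - e) + c * norm (eh - e)"
    unfolding T a_def b_def c_def
    using opnorm_mult[of "Qh x - Qs x" e] opnorm_mult[of "Qh x - Qs x" "eh - e"] opnorm_mult[of "Qs x" "eh - e"]
    by (smt (verit) norm_triangle_ineq)
  moreover have "norm e \<le> 1 + norm e ^ 4"
  proof (cases "norm e \<le> 1")
    case False
    then have "norm e \<le> norm e ^ 4" by (simp add: power_increasing[of 1 4 "norm e", simplified])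
    then show ?thesis by simp
  qed (smt (verit) zero_le_power norm_ge_zero)
  moreover have "b \<ge> 0" "c \<ge> 0" unfolding b_def c_def by (auto simp: opnorm_nonneg)
  ultimately show ?thesis
    unfolding e_def[symmetric] H_def[symmetric] U_def[symmetric] d_def[symmetric] a_def[symmetric] b_def[symmetric] c_def[symmetric]
    using B u_def
    by (smt (verit) distrib_right mult_left_mono)
qed



lemma cs_avg:
  fixes f g :: "nat \<Rightarrow> real"
  shows "(\<Sum>i<n. f i * g i) / real n \<le> sqrt ((\<Sum>i<n. (f i)\<^sup>2) / real n) * sqrt ((\<Sum>i<n. (g i)\<^sup>2) / real n)"
proof (cases "n = 0")
  case False
  have "(\<Sum>i<n. f i * g i) \<le> sqrt ((\<Sum>i<n. f i * g i)\<^sup>2)" by simp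
  also have "\<dots> \<le> sqrt ((\<Sum>i<n. (f i)\<^sup>2) * (\<Sum>i<n. (g i)\<^sup>2))"
    by (rule real_sqrt_le_mono, rule Cauchy_Schwarz_ineq_sum)
  finally have 1: "(\<Sum>i<n. f i * g i) \<le> sqrt (\<Sum>i<n. (f i)\<^sup>2) * sqrt (\<Sum>i<n. (g i)\<^sup>2)"
    by (simp add: real_sqrt_mult)
  have "sqrt ((\<Sum>i<n. (f i)\<^sup>2) / real n) * sqrt ((\<Sum>i<n. (g i)\<^sup>2) / real n)
      = sqrt (\<Sum>i<n. (f i)\<^sup>2) * sqrt (\<Sum>i<n. (g i)\<^sup>2) / real n"
    using False by (simp add: real_sqrt_divide real_sqrt_mult[symmetric] power2_eq_square[symmetric])
  then show ?thesis using 1 False by (simp add: divide_right_mono)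
qed simp

lemma sqrt_le_1_plus: "0 \<le> y \<Longrightarrow> sqrt y \<le> 1 + y"
proof -
  assume y: "0 \<le> y"
  have "y \<le> (1 + y)^2" using y by (simp add: power2_eq_square algebra_simps)
  then have "sqrt y \<le> sqrt ((1 + y)^2)" by (rule real_sqrt_le_mono)
  then show ?thesis using y by simp
qed

lemma sum_bound:
  fixes u q ne nd p :: "nat \<Rightarrow> real"
  assumes nn: "\<And>i. u i \<ge> 0" "\<And>i. q i \<ge> 0" "\<And>i. ne i \<ge> 0" "\<And>i. nd i \<ge> 0" "\<And>i. p i \<ge> 0"
    and abc: "a \<ge> 0" "b \<ge> 0" "c \<ge> 0"
  shows "(\<Sum>i<n. a + b*(1 + ne i^4) + (b+c)*(u i * q i * ne i + u i * nd i + p i * nd i)) / real n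
    \<le> a + b * (1 + (\<Sum>i<n. ne i^4)/real n) + (b+c) * (
        sqrt ((\<Sum>i<n. (u i)^2)/real n) * (1 + (\<Sum>i<n. (q i)^4)/real n + (\<Sum>i<n. ne i^4)/real n)
      + sqrt ((\<Sum>i<n. (u i)^2)/real n) * sqrt ((\<Sum>i<n. (nd i)^2)/real n)
      + (1 + (\<Sum>i<n. (p i)^2)/real n) * sqrt ((\<Sum>i<n. (nd i)^2)/real n))"
proof (cases "n = 0")
  case True
  then show ?thesis using abc by simp
next
  case False
  define DD where "DD = (\<Sum>i<n. (u i)^2)/real n"
  define Dd where "Dd = (\<Sum>i<n. (nd i)^2)/real n"
  define P2 where "P2 = (\<Sum>i<n. (p i)^2)/real n"
  define Q4 where "Q4 = (\<Sum>i<n. (q i)^4)/real n"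
  define E4 where "E4 = (\<Sum>i<n. (ne i)^4)/real n"
  have DDn: "DD \<ge> 0" "Dd \<ge> 0" "P2 \<ge> 0" unfolding DD_def Dd_def P2_def by (auto intro!: sum_nonneg divide_nonneg_nonneg)
  have s1: "(\<Sum>i<n. u i * (q i * ne i)) / real n \<le> sqrt DD * (1 + Q4 + E4)"
  proof -
    have "(\<Sum>i<n. u i * (q i * ne i)) / real n \<le> sqrt DD * sqrt ((\<Sum>i<n. (q i * ne i)^2) / real n)"
      unfolding DD_def by (rule cs_avg)
    also have "\<dots> \<le> sqrt DD * (1 + (\<Sum>i<n. (q i * ne i)^2) / real n)"
      using DDn by (intro mult_left_mono sqrt_le_1_plus) (auto intro!: sum_nonneg divide_nonneg_nonneg)
    also have "\<dots> \<le> sqrt DD * (1 + Q4 + E4)"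
    proof -
      have "\<And>i. (q i * ne i)^2 \<le> (q i)^4 + (ne i)^4"
      proof -
        fix i
        have "0 \<le> ((q i)^2 - (ne i)^2)^2" by simp
        moreover have "0 \<le> (q i)^2 * (ne i)^2" by simp
        ultimately show "(q i * ne i)^2 \<le> (q i)^4 + (ne i)^4"
          apply (simp add: power_mult_distrib power2_diff)
          using \<open>0 \<le> (q i)^2 * (ne i)^2\<close> by linarith
      qed
      then have "(\<Sum>i<n. (q i * ne i)^2) \<le> (\<Sum>i<n. (q i)^4) + (\<Sum>i<n. (ne i)^4)"
        by (simp add: sum.distrib[symmetric] sum_mono)
      then have "(\<Sum>i<n. (q i * ne i)^2) / real n \<le> Q4 + E4"
        unfolding Q4_def E4_def by (simp add: divide_right_mono add_divide_distrib[symmetric])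
      then show ?thesis using DDn by (intro mult_left_mono) auto
    qed
    finally show ?thesis .
  qed
  have s2: "(\<Sum>i<n. u i * nd i) / real n \<le> sqrt DD * sqrt Dd"
    unfolding DD_def Dd_def by (rule cs_avg)
  have s3: "(\<Sum>i<n. p i * nd i) / real n \<le> (1 + P2) * sqrt Dd"
  proof -
    have "(\<Sum>i<n. p i * nd i) / real n \<le> sqrt P2 * sqrt Dd"
      unfolding P2_def Dd_def by (rule cs_avg)
    also have "\<dots> \<le> (1 + P2) * sqrt Dd" using DDn by (intro mult_right_mono sqrt_le_1_plus) auto
    finally show ?thesis .
  qed
  have "(\<Sum>i<n. a + b*(1 + ne i^4) + (b+c)*(u i * q i * ne i + u i * nd i + p i * nd i)) / real n
     = a + b * (1 + E4) + (b+c) * ((\<Sum>i<n. u i * (q i * ne i)) / real n + (\<Sum>i<n. u i * nd i) / real n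
        + (\<Sum>i<n. p i * nd i) / real n)"
    using False unfolding E4_def
    by (simp add: sum.distrib sum_distrib_left[symmetric] add_divide_distrib distrib_left mult.assoc)
  also have "\<dots> \<le> a + b * (1 + E4) + (b+c) * (sqrt DD * (1 + Q4 + E4) + sqrt DD * sqrt Dd + (1 + P2) * sqrt Dd)"
    using s1 s2 s3 abc by (intro add_left_mono mult_left_mono) auto
  finally show ?thesis unfolding DD_def Dd_def P2_def Q4_def E4_def .
qed


lemma cont_mv: "continuous_on UNIV (\<lambda>x::(real^'n^'m) \<times> (real^'n). fst x *v snd x)"
  unfolding matrix_vector_mult_def by (intro continuous_intros)


definition bip :: "'a measure \<Rightarrow> (nat \<Rightarrow> 'a \<Rightarrow> real) \<Rightarrow> bool" where
  "bip M Z \<longleftrightarrow> (\<forall>\<delta>>0. \<exists>K. \<exists>N. \<forall>n\<ge>N. \<exists>A\<in>sets M. {\<omega>\<in>space M. \<bar>Z n \<omega>\<bar> > K} \<subseteq> A \<and> measure M A < \<delta>)"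

lemma conv0_iff: "conv_in_prob M Z (0::real) \<longleftrightarrow>
   (\<forall>e>0. \<forall>\<delta>>0. \<exists>N. \<forall>n\<ge>N. \<exists>A\<in>sets M. {\<omega>\<in>space M. \<bar>Z n \<omega>\<bar> > e} \<subseteq> A \<and> measure M A < \<delta>)"
  unfolding conv_in_prob_def by (simp add: dist_real_def)

lemma conv_bip:
  assumes "conv_in_prob M Z (c::real)" shows "bip M Z"
  unfolding bip_def
proof (intro allI impI)
  fix \<delta> :: real assume "\<delta> > 0"
  then obtain N where N: "\<forall>n\<ge>N. \<exists>A\<in>sets M. {\<omega>\<in>space M. dist (Z n \<omega>) c > 1} \<subseteq> A \<and> measure M A < \<delta>"
    using assms unfolding conv_in_prob_def by (meson zero_less_one)
  show "\<exists>K N. \<forall>n\<ge>N. \<exists>A\<in>sets M. {\<omega> \<in> space M. K < \<bar>Z n \<omega>\<bar>} \<subseteq> A \<and> measure M A < \<delta>"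
  proof (intro exI[of _ "\<bar>c\<bar> + 1"] exI[of _ N] allI impI)
    fix n assume "n \<ge> N"
    then obtain A where A: "A \<in> sets M" "{\<omega>\<in>space M. dist (Z n \<omega>) c > 1} \<subseteq> A" "measure M A < \<delta>" using N by blast
    have "{\<omega> \<in> space M. \<bar>c\<bar> + 1 < \<bar>Z n \<omega>\<bar>} \<subseteq> {\<omega>\<in>space M. dist (Z n \<omega>) c > 1}"
      by (auto simp: dist_real_def)
    then show "\<exists>A\<in>sets M. {\<omega> \<in> space M. \<bar>c\<bar> + 1 < \<bar>Z n \<omega>\<bar>} \<subseteq> A \<and> measure M A < \<delta>"
      using A by blast
  qed
qed

lemma bip_const: "bip M (\<lambda>n \<omega>. c)"
  unfolding bip_def by (intro allI impI exI[of _ "\<bar>c\<bar>"] exI[of _ 0]) (auto intro!: bexI[of _ "{}"])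

context
  fixes M :: "'a measure"
  assumes P: "prob_space M"
begin

lemma union_small:
  assumes "A \<in> sets M" "B \<in> sets M" "measure M A < d1" "measure M B < d2"
  shows "measure M (A \<union> B) < d1 + d2"
proof -
  interpret prob_space M by (rule P)
  have "measure M (A \<union> B) \<le> measure M A + measure M B" by (rule measure_Un_le) (use assms in auto)
  then show ?thesis using assms by linarith
qed

lemma bip_add:
  assumes "bip M Z" "bip M W" shows "bip M (\<lambda>n \<omega>. Z n \<omega> + W n \<omega>)"
  unfolding bip_def
proof (intro allI impI)
  fix \<delta> :: real assume d: "\<delta> > 0"
  have "\<exists>K1 N1. \<forall>n\<ge>N1. \<exists>A\<in>sets M. {\<omega>\<in>space M. \<bar>Z n \<omega>\<bar> > K1} \<subseteq> A \<and> measure M A < \<delta>/2"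
    by (rule assms(1)[unfolded bip_def, rule_format, of "\<delta>/2"]) (use d in auto)
  then obtain K1 N1 where 1: "\<forall>n\<ge>N1. \<exists>A\<in>sets M. {\<omega>\<in>space M. \<bar>Z n \<omega>\<bar> > K1} \<subseteq> A \<and> measure M A < \<delta>/2" by blast
  have "\<exists>K2 N2. \<forall>n\<ge>N2. \<exists>A\<in>sets M. {\<omega>\<in>space M. \<bar>W n \<omega>\<bar> > K2} \<subseteq> A \<and> measure M A < \<delta>/2"
    by (rule assms(2)[unfolded bip_def, rule_format, of "\<delta>/2"]) (use d in auto)
  then obtain K2 N2 where 2: "\<forall>n\<ge>N2. \<exists>A\<in>sets M. {\<omega>\<in>space M. \<bar>W n \<omega>\<bar> > K2} \<subseteq> A \<and> measure M A < \<delta>/2" by blast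
  show "\<exists>K N. \<forall>n\<ge>N. \<exists>A\<in>sets M. {\<omega> \<in> space M. K < \<bar>Z n \<omega> + W n \<omega>\<bar>} \<subseteq> A \<and> measure M A < \<delta>"
  proof (intro exI[of _ "K1 + K2"] exI[of _ "max N1 N2"] allI impI)
    fix n assume "max N1 N2 \<le> n"
    then have n12: "N1 \<le> n" "N2 \<le> n" by auto
    from 1[rule_format, OF n12(1)] obtain A where A: "A \<in> sets M" "{\<omega>\<in>space M. \<bar>Z n \<omega>\<bar> > K1} \<subseteq> A" "measure M A < \<delta>/2" by blast
    from 2[rule_format, OF n12(2)] obtain B where B: "B \<in> sets M" "{\<omega>\<in>space M. \<bar>W n \<omega>\<bar> > K2} \<subseteq> B" "measure M B < \<delta>/2" by blast
    have "{\<omega> \<in> space M. K1 + K2 < \<bar>Z n \<omega> + W n \<omega>\<bar>} \<subseteq> A \<union> B"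
    proof safe
      fix \<omega> assume w: "\<omega> \<in> space M" "K1 + K2 < \<bar>Z n \<omega> + W n \<omega>\<bar>" "\<omega> \<notin> B"
      have "\<not> K2 < \<bar>W n \<omega>\<bar>" using B(2) w(1,3) by blast
      then have "K1 < \<bar>Z n \<omega>\<bar>" using w(2) abs_triangle_ineq[of "Z n \<omega>" "W n \<omega>"] by linarith
      then show "\<omega> \<in> A" using A(2) w(1) by blast
    qed
    moreover have "measure M (A \<union> B) < \<delta>" using union_small[OF A(1) B(1) A(3) B(3)] by simp
    ultimately show "\<exists>A\<in>sets M. {\<omega> \<in> space M. K1 + K2 < \<bar>Z n \<omega> + W n \<omega>\<bar>} \<subseteq> A \<and> measure M A < \<delta>"
      using A(1) B(1) by blast
  qed
qed

lemma conv0_add: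
  assumes "conv_in_prob M Z (0::real)" "conv_in_prob M W 0"
  shows "conv_in_prob M (\<lambda>n \<omega>. Z n \<omega> + W n \<omega>) 0"
  unfolding conv0_iff
proof (intro allI impI)
  fix e \<delta> :: real assume e: "e > 0" and d: "\<delta> > 0"
  have "\<exists>N1. \<forall>n\<ge>N1. \<exists>A\<in>sets M. {\<omega>\<in>space M. \<bar>Z n \<omega>\<bar> > e/2} \<subseteq> A \<and> measure M A < \<delta>/2"
    by (rule assms(1)[unfolded conv0_iff, rule_format, of "e/2" "\<delta>/2"]) (use e d in auto)
  then obtain N1 where 1: "\<forall>n\<ge>N1. \<exists>A\<in>sets M. {\<omega>\<in>space M. \<bar>Z n \<omega>\<bar> > e/2} \<subseteq> A \<and> measure M A < \<delta>/2" by blast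
  have "\<exists>N2. \<forall>n\<ge>N2. \<exists>A\<in>sets M. {\<omega>\<in>space M. \<bar>W n \<omega>\<bar> > e/2} \<subseteq> A \<and> measure M A < \<delta>/2"
    by (rule assms(2)[unfolded conv0_iff, rule_format, of "e/2" "\<delta>/2"]) (use e d in auto)
  then obtain N2 where 2: "\<forall>n\<ge>N2. \<exists>A\<in>sets M. {\<omega>\<in>space M. \<bar>W n \<omega>\<bar> > e/2} \<subseteq> A \<and> measure M A < \<delta>/2" by blast
  show "\<exists>N. \<forall>n\<ge>N. \<exists>A\<in>sets M. {\<omega> \<in> space M. e < \<bar>Z n \<omega> + W n \<omega>\<bar>} \<subseteq> A \<and> measure M A < \<delta>"
  proof (intro exI[of _ "max N1 N2"] allI impI)
    fix n assume "max N1 N2 \<le> n"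
    then have n12: "N1 \<le> n" "N2 \<le> n" by auto
    from 1[rule_format, OF n12(1)] obtain A where A: "A \<in> sets M" "{\<omega>\<in>space M. \<bar>Z n \<omega>\<bar> > e/2} \<subseteq> A" "measure M A < \<delta>/2" by blast
    from 2[rule_format, OF n12(2)] obtain B where B: "B \<in> sets M" "{\<omega>\<in>space M. \<bar>W n \<omega>\<bar> > e/2} \<subseteq> B" "measure M B < \<delta>/2" by blast
    have "{\<omega> \<in> space M. e < \<bar>Z n \<omega> + W n \<omega>\<bar>} \<subseteq> A \<union> B"
    proof safe
      fix \<omega> assume w: "\<omega> \<in> space M" "e < \<bar>Z n \<omega> + W n \<omega>\<bar>" "\<omega> \<notin> B"
      have "\<not> e/2 < \<bar>W n \<omega>\<bar>" using B(2) w(1,3) by blast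
      then have "e/2 < \<bar>Z n \<omega>\<bar>" using w(2) abs_triangle_ineq[of "Z n \<omega>" "W n \<omega>"] by linarith
      then show "\<omega> \<in> A" using A(2) w(1) by blast
    qed
    moreover have "measure M (A \<union> B) < \<delta>" using union_small[OF A(1) B(1) A(3) B(3)] by simp
    ultimately show "\<exists>A\<in>sets M. {\<omega> \<in> space M. e < \<bar>Z n \<omega> + W n \<omega>\<bar>} \<subseteq> A \<and> measure M A < \<delta>"
      using A(1) B(1) by blast
  qed
qed

lemma conv0_mult_bip:
  assumes "conv_in_prob M Z (0::real)" "bip M W"
  shows "conv_in_prob M (\<lambda>n \<omega>. Z n \<omega> * W n \<omega>) 0"
  unfolding conv0_iff
proof (intro allI impI)
  fix e \<delta> :: real assume e: "e > 0" and d: "\<delta> > 0"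
  have "\<exists>K0 N2. \<forall>n\<ge>N2. \<exists>A\<in>sets M. {\<omega>\<in>space M. \<bar>W n \<omega>\<bar> > K0} \<subseteq> A \<and> measure M A < \<delta>/2"
    by (rule assms(2)[unfolded bip_def, rule_format, of "\<delta>/2"]) (use d in auto)
  then obtain K0 N2 where 2: "\<forall>n\<ge>N2. \<exists>A\<in>sets M. {\<omega>\<in>space M. \<bar>W n \<omega>\<bar> > K0} \<subseteq> A \<and> measure M A < \<delta>/2" by blast
  define K where "K = max K0 1"
  have K: "K > 0" "K \<ge> K0" unfolding K_def by auto
  have "\<exists>N1. \<forall>n\<ge>N1. \<exists>A\<in>sets M. {\<omega>\<in>space M. \<bar>Z n \<omega>\<bar> > e/K} \<subseteq> A \<and> measure M A < \<delta>/2"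
    by (rule assms(1)[unfolded conv0_iff, rule_format, of "e/K" "\<delta>/2"]) (use e d K in auto)
  then obtain N1 where 1: "\<forall>n\<ge>N1. \<exists>A\<in>sets M. {\<omega>\<in>space M. \<bar>Z n \<omega>\<bar> > e/K} \<subseteq> A \<and> measure M A < \<delta>/2" by blast
  show "\<exists>N. \<forall>n\<ge>N. \<exists>A\<in>sets M. {\<omega> \<in> space M. e < \<bar>Z n \<omega> * W n \<omega>\<bar>} \<subseteq> A \<and> measure M A < \<delta>"
  proof (intro exI[of _ "max N1 N2"] allI impI)
    fix n assume "max N1 N2 \<le> n"
    then have n12: "N1 \<le> n" "N2 \<le> n" by auto
    from 1[rule_format, OF n12(1)] obtain A where A: "A \<in> sets M" "{\<omega>\<in>space M. \<bar>Z n \<omega>\<bar> > e/K} \<subseteq> A" "measure M A < \<delta>/2" by blast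
    from 2[rule_format, OF n12(2)] obtain B where B: "B \<in> sets M" "{\<omega>\<in>space M. \<bar>W n \<omega>\<bar> > K0} \<subseteq> B" "measure M B < \<delta>/2" by blast
    have "{\<omega> \<in> space M. e < \<bar>Z n \<omega> * W n \<omega>\<bar>} \<subseteq> A \<union> B"
    proof safe
      fix \<omega> assume w: "\<omega> \<in> space M" "e < \<bar>Z n \<omega> * W n \<omega>\<bar>" "\<omega> \<notin> B"
      then have "\<not> K0 < \<bar>W n \<omega>\<bar>" using B(2) by blast
      then have "\<bar>W n \<omega>\<bar> \<le> K" using K by linarith
      moreover have "\<bar>Z n \<omega>\<bar> > e/K"
      proof (rule ccontr)
        assume "\<not> \<bar>Z n \<omega>\<bar> > e/K"
        then have "\<bar>Z n \<omega>\<bar> * \<bar>W n \<omega>\<bar> \<le> e/K * K"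
          using \<open>\<bar>W n \<omega>\<bar> \<le> K\<close> by (intro mult_mono) auto
        then show False using w K by (simp add: abs_mult)
      qed
      ultimately show "\<omega> \<in> A" using A w by auto
    qed
    moreover have "measure M (A \<union> B) < \<delta>" using union_small[OF A(1) B(1) A(3) B(3)] by simp
    ultimately show "\<exists>A\<in>sets M. {\<omega> \<in> space M. e < \<bar>Z n \<omega> * W n \<omega>\<bar>} \<subseteq> A \<and> measure M A < \<delta>"
      using A(1) B(1) by blast
  qed
qed

lemma bip_mult_conv0:
  assumes "bip M W" "conv_in_prob M Z (0::real)"
  shows "conv_in_prob M (\<lambda>n \<omega>. W n \<omega> * Z n \<omega>) 0"
  using conv0_mult_bip[OF assms(2,1)] by (simp add: mult.commute)

lemma conv0_sqrt:
  assumes "conv_in_prob M Z (0::real)"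
  shows "conv_in_prob M (\<lambda>n \<omega>. sqrt (Z n \<omega>)) 0"
  unfolding conv0_iff
proof (intro allI impI)
  fix e \<delta> :: real assume e: "e > 0" and d: "\<delta> > 0"
  then obtain N where N: "\<forall>n\<ge>N. \<exists>A\<in>sets M. {\<omega>\<in>space M. \<bar>Z n \<omega>\<bar> > e^2} \<subseteq> A \<and> measure M A < \<delta>"
    using assms unfolding conv0_iff by (meson zero_less_power)
  have sub: "{\<omega>\<in>space M. \<bar>sqrt (Z n \<omega>)\<bar> > e} \<subseteq> {\<omega>\<in>space M. \<bar>Z n \<omega>\<bar> > e^2}" for n
  proof safe
    fix \<omega> assume "\<omega> \<in> space M" "e < \<bar>sqrt (Z n \<omega>)\<bar>"
    moreover have "\<bar>sqrt (Z n \<omega>)\<bar> = sqrt \<bar>Z n \<omega>\<bar>"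
      by (cases "Z n \<omega> \<ge> 0") (auto simp: real_sqrt_minus)
    ultimately have "sqrt (e^2) < sqrt \<bar>Z n \<omega>\<bar>" using e by simp
    then show "e^2 < \<bar>Z n \<omega>\<bar>" by (simp only: real_sqrt_less_iff)
  qed
  show "\<exists>N. \<forall>n\<ge>N. \<exists>A\<in>sets M. {\<omega>\<in>space M. \<bar>sqrt (Z n \<omega>)\<bar> > e} \<subseteq> A \<and> measure M A < \<delta>"
  proof (intro exI[of _ N] allI impI)
    fix n assume "n \<ge> N"
    then obtain A where "A\<in>sets M" "{\<omega>\<in>space M. \<bar>Z n \<omega>\<bar> > e^2} \<subseteq> A" "measure M A < \<delta>" using N by blast
    then show "\<exists>A\<in>sets M. {\<omega>\<in>space M. \<bar>sqrt (Z n \<omega>)\<bar> > e} \<subseteq> A \<and> measure M A < \<delta>"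
      using sub[of n] by blast
  qed
qed

lemma conv0_dom:
  assumes dom: "\<And>n. AE \<omega> in M. \<bar>Z n \<omega>\<bar> \<le> W n \<omega>" and W: "conv_in_prob M W (0::real)"
  shows "conv_in_prob M Z 0"
  unfolding conv0_iff
proof (intro allI impI)
  fix e \<delta> :: real assume e: "e > 0" and d: "\<delta> > 0"
  then obtain N where N: "\<forall>n\<ge>N. \<exists>A\<in>sets M. {\<omega>\<in>space M. \<bar>W n \<omega>\<bar> > e} \<subseteq> A \<and> measure M A < \<delta>"
    using W unfolding conv0_iff by blast
  show "\<exists>N. \<forall>n\<ge>N. \<exists>A\<in>sets M. {\<omega>\<in>space M. \<bar>Z n \<omega>\<bar> > e} \<subseteq> A \<and> measure M A < \<delta>"
  proof (intro exI[of _ N] allI impI)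
    fix n assume "n \<ge> N"
    then obtain A where A: "A \<in> sets M" "{\<omega>\<in>space M. \<bar>W n \<omega>\<bar> > e} \<subseteq> A" "measure M A < \<delta>" using N by blast
    obtain B where B: "{\<omega>\<in>space M. \<not> \<bar>Z n \<omega>\<bar> \<le> W n \<omega>} \<subseteq> B" "emeasure M B = 0" "B \<in> sets M"
      using dom[of n] by (rule AE_E)
    have mB: "measure M B = 0" using B by (simp add: measure_def)
    have "{\<omega>\<in>space M. \<bar>Z n \<omega>\<bar> > e} \<subseteq> A \<union> B"
    proof safe
      fix \<omega> assume w: "\<omega> \<in> space M" "e < \<bar>Z n \<omega>\<bar>" "\<omega> \<notin> B"
      have "\<bar>Z n \<omega>\<bar> \<le> W n \<omega>" using B(1) w(1,3) by blast
      then have "e < \<bar>W n \<omega>\<bar>" using w(2) by linarith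
      then show "\<omega> \<in> A" using A(2) w(1) by blast
    qed
    moreover have "measure M (A \<union> B) < \<delta>" using union_small[OF A(1) B(3), of "(measure M A + \<delta>)/2" "(\<delta> - measure M A)/2"] mB A(3)
      by (simp add: field_simps)
    ultimately show "\<exists>A\<in>sets M. {\<omega>\<in>space M. \<bar>Z n \<omega>\<bar> > e} \<subseteq> A \<and> measure M A < \<delta>"
      using A(1) B(3) by blast
  qed
qed

end


theorem theorem4:
  fixes M :: "'a measure"
    and X :: "'a \<Rightarrow> real^'dx" and Y eps :: "'a \<Rightarrow> real^'dy"
    and fstar :: "real^'dx \<Rightarrow> real^'dy" and Qstar :: "real^'dx \<Rightarrow> real^'dy^'dy"
    and xs :: "nat \<Rightarrow> 'a \<Rightarrow> real^'dx" and ys :: "nat \<Rightarrow> 'a \<Rightarrow> real^'dy"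
    and fhat :: "nat \<Rightarrow> 'a \<Rightarrow> real^'dx \<Rightarrow> real^'dy"
    and Qhat :: "nat \<Rightarrow> 'a \<Rightarrow> real^'dx \<Rightarrow> real^'dy^'dy"
  assumes P: "prob_space M"
    and X_rv: "X \<in> borel_measurable M" and eps_rv: "eps \<in> borel_measurable M"
    and fstar_meas: "fstar \<in> borel_measurable borel"
    and Qstar_meas: "Qstar \<in> borel_measurable borel"
    and model: "\<forall>\<omega>\<in>space M. Y \<omega> = fstar (X \<omega>) + Qstar (X \<omega>) *v eps \<omega>"
    and indep: "prob_space.indep_set M
        (sigma_sets (space M) {eps -` A \<inter> space M | A. A \<in> sets borel})
        (sigma_sets (space M) {X -` A \<inter> space M | A. A \<in> sets borel})"
    and mean0: "integrable M eps" "integral\<^sup>L M eps = 0"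
    and Qstar_pd: "AE x in distr M borel X. pos_def (Qstar x)"
    and data_rv: "\<forall>i. (\<lambda>\<omega>. (ys i \<omega>, xs i \<omega>)) \<in> borel_measurable M"
    and data_distr: "\<forall>i. distr M borel (\<lambda>\<omega>. (ys i \<omega>, xs i \<omega>)) = distr M borel (\<lambda>\<omega>. (Y \<omega>, X \<omega>))"
    and Qhat_pd: "\<forall>n. AE x in distr M borel X. AE \<omega> in M. pos_def (Qhat n \<omega> x)"
    and i1: "integrable M (\<lambda>\<omega>. opnorm (Qstar (X \<omega>)) ^ 4)"
    and i2: "conv_in_prob M (\<lambda>n \<omega>. (\<Sum>i<n. opnorm (Qstar (xs i \<omega>)) ^ 4) / real n)
               (\<integral>\<omega>. opnorm (Qstar (X \<omega>)) ^ 4 \<partial>M)"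
    and i3: "integrable M (\<lambda>\<omega>. opnorm (matrix_inv (Qstar (X \<omega>))) ^ 2)"
    and i4: "conv_in_prob M (\<lambda>n \<omega>. (\<Sum>i<n. opnorm (matrix_inv (Qstar (xs i \<omega>))) ^ 2) / real n)
               (\<integral>\<omega>. opnorm (matrix_inv (Qstar (X \<omega>))) ^ 2 \<partial>M)"
    and ii1: "integrable M (\<lambda>\<omega>. norm (eps \<omega>) ^ 4)"
    and ii2: "conv_in_prob M
               (\<lambda>n \<omega>. (\<Sum>i<n. norm (std_resid fstar Qstar (xs i \<omega>) (ys i \<omega>)) ^ 4) / real n)
               (\<integral>\<omega>. norm (eps \<omega>) ^ 4 \<partial>M)"
    and iii1: "AE x in distr M borel X.
                 conv_in_prob M (\<lambda>n \<omega>. norm (fhat n \<omega> x - fstar x)) 0 \<and>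
                 conv_in_prob M (\<lambda>n \<omega>. opnorm (Qhat n \<omega> x - Qstar x)) 0"
    and iii2: "conv_in_prob M
                 (\<lambda>n \<omega>. (\<Sum>i<n. norm (fhat n \<omega> (xs i \<omega>) - fstar (xs i \<omega>)) ^ 2) / real n) 0"
    and iii3: "conv_in_prob M
                 (\<lambda>n \<omega>. (\<Sum>i<n. opnorm (matrix_inv (Qhat n \<omega> (xs i \<omega>))
                                      - matrix_inv (Qstar (xs i \<omega>))) ^ 2) / real n) 0"
  shows "AE x in distr M borel X.
           conv_in_prob M
             (\<lambda>n \<omega>. (\<Sum>i<n. norm (eps_tilde fstar Qstar (fhat n \<omega>) (Qhat n \<omega>)
                                         (xs i \<omega>) (ys i \<omega>) x)) / real n) 0"
proof -
  have snd_meas: "(snd :: (real^'dy) \<times> (real^'dx) \<Rightarrow> real^'dx) \<in> borel_measurable borel"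
    by (intro borel_measurable_continuous_onI continuous_intros)
  have xs_meas: "xs i \<in> borel_measurable M" for i
    using measurable_comp[OF data_rv[rule_format, of i] snd_meas] by (simp add: comp_def)
  have Y_meas: "Y \<in> borel_measurable M"
  proof -
    have "(\<lambda>\<omega>. fstar (X \<omega>) + Qstar (X \<omega>) *v eps \<omega>) \<in> borel_measurable M"
      using measurable_comp[OF X_rv fstar_meas] measurable_comp[OF X_rv Qstar_meas] eps_rv
        borel_measurable_continuous_Pair[OF _ _ cont_mv, of "\<lambda>\<omega>. Qstar (X \<omega>)" M eps]
      by (intro borel_measurable_add) (auto simp: comp_def)
    then show ?thesis using model by (metis (no_types, lifting) measurable_cong)
  qed
  have pY: "(\<lambda>\<omega>. (Y \<omega>, X \<omega>)) \<in> borel_measurable M"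
    using Y_meas X_rv by (rule borel_measurable_Pair)
  have dX: "distr M borel (xs i) = distr M borel X" for i
  proof -
    have "distr M borel (xs i) = distr (distr M borel (\<lambda>\<omega>. (ys i \<omega>, xs i \<omega>))) borel snd"
      using distr_distr[OF snd_meas data_rv[rule_format, of i]] by (simp add: comp_def)
    also have "\<dots> = distr (distr M borel (\<lambda>\<omega>. (Y \<omega>, X \<omega>))) borel snd"
      using data_distr by simp
    also have "\<dots> = distr M borel X"
      using distr_distr[OF snd_meas pY] by (simp add: comp_def)
    finally show ?thesis .
  qed
  have inv_ae: "AE \<omega> in M. invertible (Qstar (xs i \<omega>))" for i
  proof -
    have "AE x in distr M borel (xs i). pos_def (Qstar x)" unfolding dX[of i] by (rule Qstar_pd)
    from AE_distrD[OF xs_meas this] show ?thesis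
      by (rule eventually_mono) (rule pos_def_invertible)
  qed
  show ?thesis
    using iii1
  proof (rule eventually_mono)
    fix x
    assume ab: "conv_in_prob M (\<lambda>n \<omega>. norm (fhat n \<omega> x - fstar x)) 0 \<and>
                 conv_in_prob M (\<lambda>n \<omega>. opnorm (Qhat n \<omega> x - Qstar x)) 0"
    define a where "a = (\<lambda>n \<omega>. norm (fhat n \<omega> x - fstar x))"
    define b where "b = (\<lambda>n \<omega>. opnorm (Qhat n \<omega> x - Qstar x))"
    define c where "c = opnorm (Qstar x)"
    define E4 where "E4 = (\<lambda>n \<omega>. (\<Sum>i<n. norm (std_resid fstar Qstar (xs i \<omega>) (ys i \<omega>)) ^ 4) / real n)"
    define Q4 where "Q4 = (\<lambda>n \<omega>. (\<Sum>i<n. opnorm (Qstar (xs i \<omega>)) ^ 4) / real n)"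
    define P2 where "P2 = (\<lambda>n \<omega>. (\<Sum>i<n. opnorm (matrix_inv (Qstar (xs i \<omega>))) ^ 2) / real n)"
    define Dd where "Dd = (\<lambda>n \<omega>. (\<Sum>i<n. norm (fhat n \<omega> (xs i \<omega>) - fstar (xs i \<omega>)) ^ 2) / real n)"
    define DD where "DD = (\<lambda>n \<omega>. (\<Sum>i<n. opnorm (matrix_inv (Qhat n \<omega> (xs i \<omega>))
                                      - matrix_inv (Qstar (xs i \<omega>))) ^ 2) / real n)"
    define W where "W = (\<lambda>n \<omega>. a n \<omega> + b n \<omega> * (1 + E4 n \<omega>) + (b n \<omega> + c) * (
        sqrt (DD n \<omega>) * (1 + Q4 n \<omega> + E4 n \<omega>)
      + sqrt (DD n \<omega>) * sqrt (Dd n \<omega>)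
      + (1 + P2 n \<omega>) * sqrt (Dd n \<omega>)))"
    have ca: "conv_in_prob M a 0" and cb: "conv_in_prob M b 0" using ab unfolding a_def b_def by auto
    have cE4: "bip M E4" using conv_bip[OF ii2] unfolding E4_def .
    have cQ4: "bip M Q4" using conv_bip[OF i2] unfolding Q4_def .
    have cP2: "bip M P2" using conv_bip[OF i4] unfolding P2_def .
    have cDd: "conv_in_prob M (\<lambda>n \<omega>. sqrt (Dd n \<omega>)) 0" using conv0_sqrt[OF P iii2] unfolding Dd_def .
    have cDD: "conv_in_prob M (\<lambda>n \<omega>. sqrt (DD n \<omega>)) 0" using conv0_sqrt[OF P iii3] unfolding DD_def .
    have T1: "conv_in_prob M (\<lambda>n \<omega>. sqrt (DD n \<omega>) * (1 + Q4 n \<omega> + E4 n \<omega>)) 0"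
      using conv0_mult_bip[OF P cDD bip_add[OF P bip_add[OF P bip_const cQ4] cE4]] .
    have T2: "conv_in_prob M (\<lambda>n \<omega>. sqrt (DD n \<omega>) * sqrt (Dd n \<omega>)) 0"
      using conv0_mult_bip[OF P cDD conv_bip[OF cDd]] .
    have T3: "conv_in_prob M (\<lambda>n \<omega>. (1 + P2 n \<omega>) * sqrt (Dd n \<omega>)) 0"
      using bip_mult_conv0[OF P bip_add[OF P bip_const cP2] cDd] .
    have T: "conv_in_prob M (\<lambda>n \<omega>. sqrt (DD n \<omega>) * (1 + Q4 n \<omega> + E4 n \<omega>)
      + sqrt (DD n \<omega>) * sqrt (Dd n \<omega>) + (1 + P2 n \<omega>) * sqrt (Dd n \<omega>)) 0"
      using conv0_add[OF P conv0_add[OF P T1 T2] T3] .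
    have cW: "conv_in_prob M W 0"
      unfolding W_def
      using conv0_add[OF P conv0_add[OF P ca conv0_mult_bip[OF P cb bip_add[OF P bip_const cE4]]]
          bip_mult_conv0[OF P bip_add[OF P conv_bip[OF cb] bip_const] T]] .
    show "conv_in_prob M
             (\<lambda>n \<omega>. (\<Sum>i<n. norm (eps_tilde fstar Qstar (fhat n \<omega>) (Qhat n \<omega>)
                                         (xs i \<omega>) (ys i \<omega>) x)) / real n) 0"
    proof (rule conv0_dom[OF P _ cW])
      fix n
      have "AE \<omega> in M. \<forall>i\<in>{..<n}. invertible (Qstar (xs i \<omega>))"
        by (rule AE_finite_allI) (auto intro: inv_ae)
      then show "AE \<omega> in M. \<bar>(\<Sum>i<n. norm (eps_tilde fstar Qstar (fhat n \<omega>) (Qhat n \<omega>)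
                                         (xs i \<omega>) (ys i \<omega>) x)) / real n\<bar> \<le> W n \<omega>"
      proof (rule eventually_mono)
        fix \<omega> assume inv: "\<forall>i\<in>{..<n}. invertible (Qstar (xs i \<omega>))"
        have "(\<Sum>i<n. norm (eps_tilde fstar Qstar (fhat n \<omega>) (Qhat n \<omega>) (xs i \<omega>) (ys i \<omega>) x)) / real n
          \<le> (\<Sum>i<n. norm (fhat n \<omega> x - fstar x) + opnorm (Qhat n \<omega> x - Qstar x) * (1 + norm (std_resid fstar Qstar (xs i \<omega>) (ys i \<omega>)) ^ 4)
     + (opnorm (Qhat n \<omega> x - Qstar x) + opnorm (Qstar x)) *
       (opnorm (matrix_inv (Qhat n \<omega> (xs i \<omega>)) - matrix_inv (Qstar (xs i \<omega>))) * opnorm (Qstar (xs i \<omega>)) * norm (std_resid fstar Qstar (xs i \<omega>) (ys i \<omega>))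
        + opnorm (matrix_inv (Qhat n \<omega> (xs i \<omega>)) - matrix_inv (Qstar (xs i \<omega>))) * norm (fhat n \<omega> (xs i \<omega>) - fstar (xs i \<omega>))
        + opnorm (matrix_inv (Qstar (xs i \<omega>))) * norm (fhat n \<omega> (xs i \<omega>) - fstar (xs i \<omega>)))) / real n"
          by (intro divide_right_mono sum_mono per_i) (use inv in auto)
        also have "\<dots> \<le> W n \<omega>"
          unfolding W_def a_def b_def c_def E4_def Q4_def P2_def Dd_def DD_def
          by (rule sum_bound) (auto simp: opnorm_nonneg)
        finally show "\<bar>(\<Sum>i<n. norm (eps_tilde fstar Qstar (fhat n \<omega>) (Qhat n \<omega>)
                                         (xs i \<omega>) (ys i \<omega>) x)) / real n\<bar> \<le> W n \<omega>"
          using abs_of_nonneg[of "(\<Sum>i<n. norm (eps_tilde fstar Qstar (fhat n \<omega>) (Qhat n \<omega>)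
                                         (xs i \<omega>) (ys i \<omega>) x)) / real n"]
          by (smt (verit) divide_nonneg_nonneg sum_nonneg norm_ge_zero of_nat_0_le_iff)
      qed
    qed
  qed
qed

end
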